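(* Let $T\colon X\to X$ be a Borel measurable map of a compact metric space, let $\lambda$ be an exact non-singular Borel probability measure on $X$, and suppose $\mu\ll\lambda$ is an infinite, $\sigma$-finite, $T$-invariant measure. Then $\lambda$ is not full.
   Context: $\lambda$ is non-singular if $\lambda(A)=0$ iff $\lambda(T^{-1}A)=0$; exact if the tail $\sigma$-algebra $\bigcap_n T^{-n}\mathcal B$ is trivial mod $\lambda$. $\lambda$ is full if $\lambda(A)>0$ implies $\lim_{n\to\infty}\lambda(T^n(A))=1$ (measuring images with the completion of $\lambda$). $\mu$ is $T$-invariant if $\mu(T^{-1}A)=\mu(A)$ for all Borel $A$. *)

theory Defs
  imports "HOL-Probability.Probability"
begin

text \<open>Standing setting: X is the whole space of a type of class metric_space
  that is compact; measures live on the Borel sigma-algebra.\<close>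

definition nonsingular :: "('a \<Rightarrow> 'a) \<Rightarrow> 'a measure \<Rightarrow> bool" where
  "nonsingular T L \<longleftrightarrow>
     (\<forall>A \<in> sets L. emeasure L A = 0 \<longleftrightarrow> emeasure L (T -` A \<inter> space L) = 0)"

definition tail_sets :: "('a \<Rightarrow> 'a) \<Rightarrow> 'a measure \<Rightarrow> 'a set set" where
  "tail_sets T L = (\<Inter>n. {(T ^^ n) -` B \<inter> space L | B. B \<in> sets L})"

definition exact :: "('a \<Rightarrow> 'a) \<Rightarrow> 'a measure \<Rightarrow> bool" where
  "exact T L \<longleftrightarrow>
     (\<forall>A \<in> tail_sets T L. emeasure L A = 0 \<or> emeasure L (space L - A) = 0)"

definition full :: "('a \<Rightarrow> 'a) \<Rightarrow> 'a measure \<Rightarrow> bool" where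
  "full T L \<longleftrightarrow>
     (\<forall>A \<in> sets L. emeasure L A > 0 \<longrightarrow>
        (\<lambda>n. emeasure (completion L) ((T ^^ n) ` A)) \<longlonglongrightarrow> 1)"

definition invariant_measure :: "('a \<Rightarrow> 'a) \<Rightarrow> 'a measure \<Rightarrow> bool" where
  "invariant_measure T M \<longleftrightarrow>
     (\<forall>A \<in> sets M. emeasure M (T -` A \<inter> space M) = emeasure M A)"

end

theory Submission
  imports Defs
begin

lemma ennreal_add_le: "0 \<le> v \<Longrightarrow> ennreal (u + v) \<le> ennreal u + ennreal (v::real)"
proof (cases "0 \<le> u")
  case False
  then have "ennreal (u+v) \<le> ennreal v" by (intro ennreal_leI) simp
  then show ?thesis using False by (simp add: ennreal_neg)
qed simp

locale zt =
  fixes M :: "'a measure" and T :: "'a \<Rightarrow> 'a"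
  assumes sf: "sigma_finite_measure M" and spM: "space M = UNIV"
    and Tm: "T \<in> M \<rightarrow>\<^sub>M M"
    and inv: "\<And>A. A \<in> sets M \<Longrightarrow> emeasure M (T -` A) = emeasure M A"
    and tail: "\<And>A. (\<forall>n. \<exists>C\<in>sets M. A = (T^^n) -` C) \<Longrightarrow> emeasure M A = 0 \<or> emeasure M A = \<infinity>"
begin

definition F :: "nat \<Rightarrow> 'a measure" where "F n = vimage_algebra UNIV (T^^n) M"

lemma Tn_meas[measurable]: "(T^^n) \<in> M \<rightarrow>\<^sub>M M"
  using Tm by (rule measurable_compose_n)

lemma sets_F: "sets (F n) = {(T^^n) -` A | A. A \<in> sets M}"
  unfolding F_def by (subst sets_vimage_algebra2) (auto simp: spM)

lemma space_F[simp]: "space (F n) = UNIV"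
  unfolding F_def by simp

lemma inv_n: "A \<in> sets M \<Longrightarrow> emeasure M ((T^^n) -` A) = emeasure M A"
proof (induction n arbitrary: A)
  case 0 then show ?case by simp
next
  case (Suc n)
  have e: "(T^^Suc n) -` A = T -` ((T^^n) -` A)" by (simp only: funpow_Suc_right vimage_comp)
  have p: "(T^^n) -` A \<in> sets M"
    using measurable_sets[OF Tn_meas Suc.prems] by (simp add: spM)
  show ?case by (simp only: e inv[OF p] Suc.IH[OF Suc.prems])
qed

lemma pre_sets: "A \<in> sets M \<Longrightarrow> (T^^n) -` A \<in> sets M"
  using measurable_sets[OF Tn_meas] by (simp add: spM)

lemma subalg: "subalgebra M (F n)"
  unfolding subalgebra_def using sets_F pre_sets by (auto simp: spM)

lemma subalg_nested: "m \<le> n \<Longrightarrow> subalgebra (F m) (F n)"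
proof -
  assume "m \<le> n"
  then obtain k where n: "n = k + m" by (metis le_add_diff_inverse2)
  have "(T^^n) -` A = (T^^m) -` ((T^^k) -` A)" for A
    by (simp add: n funpow_add vimage_comp)
  then show ?thesis unfolding subalgebra_def sets_F using pre_sets by (auto; blast)
qed

lemma sfs: "sigma_finite_subalgebra M (F n)"
  unfolding sigma_finite_subalgebra_def
proof (intro conjI subalg)
  obtain A where A: "countable A" "A \<subseteq> sets M" "\<Union>A = space M" "\<forall>a\<in>A. emeasure M a \<noteq> \<infinity>"
    using sigma_finite_measure.sigma_finite_countable[OF sf] by blast
  let ?A = "(\<lambda>a. (T^^n) -` a) ` A"
  have "countable ?A" using A by simp
  moreover have "?A \<subseteq> sets (restr_to_subalg M (F n))"
    using A by (auto simp: sets_restr_to_subalg[OF subalg] sets_F)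
  moreover have "\<Union>?A = space (restr_to_subalg M (F n))"
    using A(3) by (auto simp: space_restr_to_subalg spM)
  moreover have "\<forall>a\<in>?A. emeasure (restr_to_subalg M (F n)) a \<noteq> \<infinity>"
  proof
    fix b assume "b \<in> ?A"
    then obtain a where a: "a \<in> A" "b = (T^^n) -` a" by auto
    have "b \<in> sets (F n)" using a A(2) by (auto simp: sets_F)
    then have "emeasure (restr_to_subalg M (F n)) b = emeasure M a"
      using a A(2) by (auto simp: emeasure_restr_to_subalg[OF subalg] inv_n)
    then show "emeasure (restr_to_subalg M (F n)) b \<noteq> \<infinity>" using a A(4) by auto
  qed
  ultimately show "sigma_finite_measure (restr_to_subalg M (F n))"
    unfolding sigma_finite_measure_def by blast
qed

end

locale zt2 = zt +
  fixes B assumes B: "B \<in> sets M" and Bfin: "emeasure M B < \<infinity>"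
begin

declare B[measurable]

definition g :: "nat \<Rightarrow> 'a \<Rightarrow> real" where
  "g n = real_cond_exp M (F n) (indicator B)"

lemma intB[simp]: "integrable M (indicator B :: 'a \<Rightarrow> real)"
  using B Bfin by simp

lemma g_measF[measurable]: "g n \<in> borel_measurable (F n)"
  unfolding g_def by simp

lemma g_meas[measurable]: "g n \<in> borel_measurable M"
  unfolding g_def by simp

lemma g_int: "integrable M (g n)"
proof -
  interpret Fn: sigma_finite_subalgebra M "F n" by (rule sfs)
  show ?thesis unfolding g_def by (rule Fn.real_cond_exp_int(1)) simp
qed

lemma g_01: "AE x in M. 0 \<le> g n x \<and> g n x \<le> 1"
proof -
  interpret Fn: sigma_finite_subalgebra M "F n" by (rule sfs)
  have "AE x in M. 0 \<le> g n x" unfolding g_def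
    by (rule Fn.real_cond_exp_pos) auto
  moreover have "AE x in M. g n x \<le> 1" unfolding g_def
    by (rule Fn.real_cond_exp_le_c) auto
  ultimately show ?thesis by auto
qed

lemma g_nested: "n \<le> m \<Longrightarrow> AE x in M. real_cond_exp M (F m) (g n) x = g m x"
proof -
  assume "n \<le> m"
  interpret Fm: sigma_finite_subalgebra M "F m" by (rule sfs)
  show ?thesis unfolding g_def
    by (rule Fm.real_cond_exp_nested_subalg[OF subalg subalg_nested[OF \<open>n \<le> m\<close>]]) simp
qed

lemma g_prod_int: "integrable M (\<lambda>x. g n x * g m x)"
proof (rule Bochner_Integration.integrable_bound[OF g_int[of m]])
  show "(\<lambda>x. g n x * g m x) \<in> borel_measurable M" by simp
  show "AE x in M. norm (g n x * g m x) \<le> norm (g m x)"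
    using g_01[of n] g_01[of m]
    by eventually_elim (auto simp: abs_mult intro!: mult_left_le_one_le)
qed

lemma cross: "n \<le> m \<Longrightarrow> (\<integral>x. g m x * g n x \<partial>M) = (\<integral>x. g m x * g m x \<partial>M)"
proof -
  assume nm: "n \<le> m"
  interpret Fm: sigma_finite_subalgebra M "F m" by (rule sfs)
  have "(\<integral>x. g m x * g n x \<partial>M) = (\<integral>x. g m x * real_cond_exp M (F m) (g n) x \<partial>M)"
    by (rule Fm.real_cond_exp_intg(2)[symmetric]) (auto intro: g_prod_int)
  also have "\<dots> = (\<integral>x. g m x * g m x \<partial>M)"
    using g_nested[OF nm] by (intro integral_cong_AE) auto
  finally show ?thesis .
qed

definition q :: "nat \<Rightarrow> real" where "q n = (\<integral>x. g n x * g n x \<partial>M)"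

lemma diff_sq: "n \<le> m \<Longrightarrow> (\<integral>x. (g n x - g m x)^2 \<partial>M) = q n - q m"
proof -
  assume nm: "n \<le> m"
  have "(\<integral>x. (g n x - g m x)^2 \<partial>M) =
      (\<integral>x. g n x * g n x - 2 * (g m x * g n x) + g m x * g m x \<partial>M)"
    by (intro Bochner_Integration.integral_cong) (auto simp: power2_eq_square algebra_simps)
  also have "\<dots> = q n - 2 * (\<integral>x. g m x * g n x \<partial>M) + q m"
    unfolding q_def using g_prod_int
    by (simp add: Bochner_Integration.integral_diff Bochner_Integration.integral_add)
  also have "\<dots> = q n - q m" using cross[OF nm] unfolding q_def by simp
  finally show ?thesis .
qed

lemma sq_int: "integrable M (\<lambda>x. (g n x - g m x)^2)"
  using g_prod_int by (simp add: power2_eq_square algebra_simps)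

lemma q_nonneg: "0 \<le> q n"
  unfolding q_def by simp

lemma q_mono: "n \<le> m \<Longrightarrow> q m \<le> q n"
  using diff_sq[of n m] integral_nonneg_AE[of "\<lambda>x. (g n x - g m x)^2" M] by auto

lemma cauchy: "0 < e \<Longrightarrow> \<exists>N. \<forall>n m. N \<le> n \<longrightarrow> n \<le> m \<longrightarrow> q n - q m \<le> e"
proof -
  assume e: "0 < e"
  define a where "a = Inf (range q)"
  have bdd: "bdd_below (range q)" using q_nonneg by (auto intro!: bdd_belowI[where m=0])
  have "a < a + e" using e by simp
  then obtain N where N: "q N < a + e" unfolding a_def
    using cInf_less_iff[of "range q" "a+e"] bdd by (auto simp: a_def)
  have "\<And>m. a \<le> q m" unfolding a_def using bdd by (auto intro: cInf_lower)
  then show ?thesis using N q_mono by (intro exI[of _ N]) (smt (verit, ccfv_SIG))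
qed

definition Ns :: "nat \<Rightarrow> nat" where
  "Ns k = (SOME N. \<forall>n m. N \<le> n \<longrightarrow> n \<le> m \<longrightarrow> q n - q m \<le> (1/8)^k)"

lemma Ns: "Ns k \<le> n \<Longrightarrow> n \<le> m \<Longrightarrow> q n - q m \<le> (1/8)^k"
proof -
  have "\<exists>N. \<forall>n m. N \<le> n \<longrightarrow> n \<le> m \<longrightarrow> q n - q m \<le> (1/8)^k"
    by (rule cauchy) simp
  then have "\<forall>n m. Ns k \<le> n \<longrightarrow> n \<le> m \<longrightarrow> q n - q m \<le> (1/8)^k"
    unfolding Ns_def by (rule someI_ex)
  then show "Ns k \<le> n \<Longrightarrow> n \<le> m \<Longrightarrow> q n - q m \<le> (1/8)^k" by blast
qed

definition ns :: "nat \<Rightarrow> nat" where "ns k = k + (\<Sum>j\<le>k. Ns j)"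

lemma ns_ge: "k \<le> ns k" "Ns k \<le> ns k"
  unfolding ns_def by (auto intro: trans_le_add2 member_le_sum)

lemma ns_Suc: "ns k \<le> ns (Suc k)"
  unfolding ns_def by simp

lemma ns_mono: "j \<le> k \<Longrightarrow> ns j \<le> ns k"
  using ns_Suc by (rule lift_Suc_mono_le)

lemma d_small: "(\<integral>x. (g (ns k) x - g (ns (Suc k)) x)^2 \<partial>M) \<le> (1/8)^k"
  using diff_sq[OF ns_Suc] Ns[OF ns_ge(2) ns_Suc] by simp

definition a :: "nat \<Rightarrow> 'a \<Rightarrow> real" where "a k x = \<bar>g (ns (Suc k)) x - g (ns k) x\<bar>"

lemma tele: "g (ns j) x \<le> g (ns (j + d)) x + (\<Sum>i<d. a (i + j) x)"
proof (induction d)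
  case 0 then show ?case by simp
next
  case (Suc d)
  have "g (ns (j + d)) x \<le> g (ns (j + Suc d)) x + a (d + j) x"
    unfolding a_def by (simp add: add.commute)
  then show ?case using Suc by simp
qed

definition R :: "nat \<Rightarrow> 'a \<Rightarrow> ennreal" where "R j x = (\<Sum>i. ennreal (a (i + j) x))"

definition h :: "'a \<Rightarrow> ennreal" where "h x = liminf (\<lambda>k. ennreal (g (ns k) x))"

lemma g_le_hR: "ennreal (g (ns j) x) \<le> h x + R j x"
proof -
  have "ennreal (g (ns j) x) \<le> ennreal (g (ns (d + j)) x) + R j x" for d
  proof -
    have "ennreal (g (ns j) x) \<le> ennreal (g (ns (j + d)) x + (\<Sum>i<d. a (i + j) x))"
      using tele by (rule ennreal_leI)
    also have "\<dots> \<le> ennreal (g (ns (j + d)) x) + ennreal (\<Sum>i<d. a (i + j) x)"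
      by (rule ennreal_add_le) (simp add: a_def sum_nonneg)
    also have "ennreal (\<Sum>i<d. a (i + j) x) = (\<Sum>i<d. ennreal (a (i + j) x))"
      by (rule sum_ennreal[symmetric]) (simp add: a_def)
    also have "\<dots> \<le> R j x" unfolding R_def by (rule sum_le_suminf) auto
    finally show ?thesis by (simp add: add.commute add_left_mono)
  qed
  then have "ennreal (g (ns j) x) \<le> liminf (\<lambda>d. ennreal (g (ns (d + j)) x) + R j x)"
    by (intro Liminf_bounded) auto
  also have "\<dots> = liminf (\<lambda>d. ennreal (g (ns (d + j)) x)) + R j x"
    by (rule Liminf_add_const) simp
  also have "liminf (\<lambda>d. ennreal (g (ns (d + j)) x)) = h x"
    unfolding h_def by (rule liminf_shift_k)
  finally show ?thesis .
qed

lemma h_measF[measurable]: "h \<in> borel_measurable (F m)"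
proof -
  have eq: "h = (\<lambda>x. liminf (\<lambda>d. ennreal (g (ns (d + m)) x)))"
    unfolding h_def by (intro ext liminf_shift_k[symmetric])
  have "g (ns (d + m)) \<in> borel_measurable (F m)" for d
  proof (rule measurable_from_subalg[OF subalg_nested])
    show "m \<le> ns (d + m)" using ns_ge(1)[of "d+m"] by simp
  qed simp
  then show ?thesis unfolding eq by measurable
qed

lemma h_meas[measurable]: "h \<in> borel_measurable M"
  by (rule measurable_from_subalg[OF subalg h_measF[of 0]])

lemma int_g: "(\<integral>\<^sup>+x. ennreal (g n x) \<partial>M) = emeasure M B"
proof -
  interpret Fn: sigma_finite_subalgebra M "F n" by (rule sfs)
  have "(\<integral>\<^sup>+x. ennreal (g n x) \<partial>M) = ennreal (\<integral>x. g n x \<partial>M)"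
    using g_01[of n] by (intro nn_integral_eq_integral g_int) auto
  also have "(\<integral>x. g n x \<partial>M) = (\<integral>x. indicator B x \<partial>M)"
    unfolding g_def by (rule Fn.real_cond_exp_int(2)) simp
  also have "\<dots> = measure M B" by simp
  finally show ?thesis using Bfin by (simp add: emeasure_eq_ennreal_measure)
qed

lemma int_h: "(\<integral>\<^sup>+x. h x \<partial>M) \<le> emeasure M B"
proof -
  have "(\<integral>\<^sup>+x. h x \<partial>M) \<le> liminf (\<lambda>k. \<integral>\<^sup>+x. ennreal (g (ns k) x) \<partial>M)"
    unfolding h_def by (rule nn_integral_liminf) simp
  also have "\<dots> = emeasure M B" by (simp add: int_g Liminf_const)
  finally show ?thesis .
qed

lemma hlev_meas[measurable]: "{x. c < h x} \<in> sets M"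
proof -
  have "{x\<in>space M. c < h x} \<in> sets M" by measurable
  then show ?thesis by (simp add: spM)
qed

lemma h_level: "0 < t \<Longrightarrow> emeasure M {x. ennreal t < h x} = 0"
proof -
  assume t: "0 < t"
  let ?S = "{x. ennreal t < h x}"
  have SF: "?S \<in> sets (F m)" for m
  proof -
    have "{x\<in>space (F m). ennreal t < h x} \<in> sets (F m)" by measurable
    then show ?thesis by simp
  qed
  have SM[measurable]: "?S \<in> sets M" using SF[of 0] subalg[of 0] by (auto simp: subalgebra_def)
  have "\<forall>n. \<exists>C\<in>sets M. ?S = (T^^n) -` C"
    using SF unfolding sets_F by blast
  then have dich: "emeasure M ?S = 0 \<or> emeasure M ?S = \<infinity>" by (rule tail)
  have "ennreal t * emeasure M ?S = (\<integral>\<^sup>+x. ennreal t * indicator ?S x \<partial>M)"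
    by (rule nn_integral_cmult_indicator[symmetric]) simp
  also have "\<dots> \<le> (\<integral>\<^sup>+x. h x \<partial>M)"
    by (intro nn_integral_mono) (auto simp: indicator_def less_imp_le)
  also have "\<dots> < \<infinity>" using int_h Bfin by (simp add: le_less_trans)
  finally have "emeasure M ?S \<noteq> \<infinity>" using t by (auto simp: ennreal_mult_top)
  then show ?thesis using dich by simp
qed

lemma h_AE0: "AE x in M. h x = 0"
proof -
  have "AE x in M. \<forall>i::nat. x \<notin> {x. ennreal (1 / Suc i) < h x}"
    unfolding AE_all_countable
  proof
    fix i :: nat
    show "AE x in M. x \<notin> {x. ennreal (1 / Suc i) < h x}"
      by (rule AE_not_in) (auto intro!: null_setsI h_level)
  qed
  then show ?thesis
  proof eventually_elim
    case (elim x)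
    have "h x \<le> 0"
    proof (rule ennreal_le_epsilon)
      fix e :: real assume e: "0 < e"
      obtain n :: nat where n: "0 < n" "inverse (real n) < e" using ex_inverse_of_nat_less[OF e] by auto
      then obtain i where i: "n = Suc i" by (cases n) auto
      have "h x \<le> ennreal (1 / Suc i)" using elim by (auto simp: not_less)
      also have "\<dots> \<le> ennreal e" using n i by (intro ennreal_leI) (simp add: field_simps)
      finally show "h x \<le> 0 + ennreal e" by simp
    qed
    then show ?case by simp
  qed
qed

lemma amgm: "0 < e \<Longrightarrow> (x::real) \<le> e + x^2 / e"
proof -
  assume e: "0 < e"
  have "0 \<le> (x - e)^2" by simp
  then have h: "2*(x*e) \<le> e * e + x^2" by (simp add: power2_diff power2_eq_square algebra_simps)
  have "0 \<le> e * e" "0 \<le> x^2" by simp_all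
  then have "x * e \<le> e * e + x^2" using h by linarith
  then have "x \<le> (e * e + x^2) / e" using e by (simp add: pos_le_divide_eq)
  also have "\<dots> = e + x^2 / e" using e by (simp add: field_simps)
  finally show ?thesis .
qed

lemma E_F: "(T^^n) -` B \<in> sets (F n)"
  using B by (auto simp: sets_F)

lemma E_M[measurable]: "(T^^n) -` B \<in> sets M"
  using B by (rule pre_sets)

lemma meas_BE: "ennreal (measure M (B \<inter> (T^^n) -` B)) =
    (\<integral>\<^sup>+x. indicator ((T^^n) -` B) x * ennreal (g n x) \<partial>M)"
proof -
  interpret Fn: sigma_finite_subalgebra M "F n" by (rule sfs)
  let ?E = "(T^^n) -` B"
  have "(\<integral>x\<in>?E. indicator B x \<partial>M) = (\<integral>x\<in>?E. g n x \<partial>M)"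
    unfolding g_def by (rule Fn.real_cond_exp_intA) (simp_all add: E_F)
  moreover have "(\<integral>x\<in>?E. indicator B x \<partial>M) = measure M (B \<inter> ?E)"
    unfolding set_lebesgue_integral_def
    by (simp add: indicator_inter_arith[symmetric] spM Int_commute)
  moreover have "ennreal (\<integral>x\<in>?E. g n x \<partial>M) = (\<integral>\<^sup>+x. ennreal (indicator ?E x * g n x) \<partial>M)"
  proof -
    have i: "integrable M (\<lambda>x. indicator ?E x * g n x)"
      using integrable_mult_indicator[OF E_M g_int] by simp
    show ?thesis
      unfolding set_lebesgue_integral_def real_scaleR_def using g_01[of n]
      by (intro nn_integral_eq_integral[symmetric] i) (auto simp: indicator_def)
  qed
  moreover have "(\<integral>\<^sup>+x. ennreal (indicator ?E x * g n x) \<partial>M) =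
      (\<integral>\<^sup>+x. indicator ?E x * ennreal (g n x) \<partial>M)"
    by (intro nn_integral_cong) (simp split: split_indicator)
  ultimately show ?thesis by simp
qed

lemma sqa_int: "integrable M (\<lambda>x. (a k x)^2)"
  using sq_int[of "ns k" "ns (Suc k)"] unfolding a_def
  by (simp add: power2_abs power2_commute)

lemma term_bound: "(\<integral>\<^sup>+x. indicator ((T^^n) -` B) x * ennreal (a k x) \<partial>M)
    \<le> ennreal ((1/2)^k * (measure M B + 1))"
proof -
  let ?E = "(T^^n) -` B"
  have "(\<integral>\<^sup>+x. indicator ?E x * ennreal (a k x) \<partial>M) \<le>
      (\<integral>\<^sup>+x. ennreal ((1/2)^k) * indicator ?E x + ennreal (2^k * (a k x)^2) \<partial>M)"
  proof (intro nn_integral_mono)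
    fix x
    have "a k x \<le> (1/2)^k + (a k x)^2 / (1/2)^k" by (rule amgm) simp
    also have "(a k x)^2 / (1/2)^k = 2^k * (a k x)^2" by (simp add: field_simps)
    finally have "a k x \<le> (1/2)^k + 2^k * (a k x)^2" .
    then have "ennreal (a k x) \<le> ennreal ((1/2)^k) + ennreal (2^k * (a k x)^2)"
      by (simp add: ennreal_plus[symmetric] ennreal_leI del: ennreal_plus)
    then show "indicator ?E x * ennreal (a k x) \<le> ennreal ((1/2)^k) * indicator ?E x + ennreal (2^k * (a k x)^2)"
      by (simp split: split_indicator)
  qed
  also have "\<dots> = ennreal ((1/2)^k) * emeasure M ?E + (\<integral>\<^sup>+x. ennreal (2^k * (a k x)^2) \<partial>M)"
    by (subst nn_integral_add) (auto simp: a_def nn_integral_cmult_indicator)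
  also have "(\<integral>\<^sup>+x. ennreal (2^k * (a k x)^2) \<partial>M) = ennreal (\<integral>x. 2^k * (a k x)^2 \<partial>M)"
    by (intro nn_integral_eq_integral) (auto intro: sqa_int)
  also have "(\<integral>x. 2^k * (a k x)^2 \<partial>M) = 2^k * (\<integral>x. (a k x)^2 \<partial>M)" by simp
  also have "(\<integral>x. (a k x)^2 \<partial>M) = (\<integral>x. (g (ns k) x - g (ns (Suc k)) x)^2 \<partial>M)"
    unfolding a_def by (simp add: power2_abs power2_commute)
  also have "emeasure M ?E = ennreal (measure M B)"
    using Bfin inv_n[OF B, of n] by (simp add: emeasure_eq_ennreal_measure)
  finally have fin0: "(\<integral>\<^sup>+x. indicator ?E x * ennreal (a k x) \<partial>M) \<le>
      ennreal ((1/2)^k) * ennreal (measure M B) + ennreal (2^k * (\<integral>x. (g (ns k) x - g (ns (Suc k)) x)^2 \<partial>M))" .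
  have nn: "0 \<le> (\<integral>x. (g (ns k) x - g (ns (Suc k)) x)^2 \<partial>M)" by simp
  have "(\<integral>\<^sup>+x. indicator ?E x * ennreal (a k x) \<partial>M) \<le>
      ennreal ((1/2)^k * measure M B + 2^k * (\<integral>x. (g (ns k) x - g (ns (Suc k)) x)^2 \<partial>M))"
  proof -
    have "ennreal ((1/2)^k * measure M B + 2^k * (\<integral>x. (g (ns k) x - g (ns (Suc k)) x)^2 \<partial>M))
      = ennreal ((1/2)^k * measure M B) + ennreal (2^k * (\<integral>x. (g (ns k) x - g (ns (Suc k)) x)^2 \<partial>M))"
      using nn by (intro ennreal_plus) auto
    moreover have "ennreal ((1/2)^k * measure M B) = ennreal ((1/2)^k) * ennreal (measure M B)"
      by (intro ennreal_mult) auto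
    ultimately show ?thesis using fin0 by simp
  qed
  also have "\<dots> \<le> ennreal ((1/2)^k * (measure M B + 1))"
  proof (intro ennreal_leI)
    have "2^k * (\<integral>x. (g (ns k) x - g (ns (Suc k)) x)^2 \<partial>M) \<le> (2::real)^k * (1/8)^k"
      using d_small by (intro mult_left_mono) auto
    also have "(2::real)^k * (1/8)^k = (1/4)^k * 1" by (simp add: power_mult_distrib[symmetric])
    also have "\<dots> \<le> (1/2)^k * 1" by (intro mult_right_mono power_mono) auto
    finally show "(1/2)^k * measure M B + 2^k * (\<integral>x. (g (ns k) x - g (ns (Suc k)) x)^2 \<partial>M)
        \<le> (1/2)^k * (measure M B + 1)" by (simp add: algebra_simps)
  qed
  finally show ?thesis .
qed

lemma BE_bound: "ennreal (measure M (B \<inter> (T^^ns j) -` B)) \<le> ennreal (2 * (1/2)^j * (measure M B + 1))"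
proof -
  let ?E = "(T^^ns j) -` B"
  have ae: "AE x in M. ennreal (g (ns j) x) \<le> R j x"
    using h_AE0 by eventually_elim (metis g_le_hR add_0)
  have "ennreal (measure M (B \<inter> ?E)) = (\<integral>\<^sup>+x. indicator ?E x * ennreal (g (ns j) x) \<partial>M)"
    by (rule meas_BE)
  also have "\<dots> \<le> (\<integral>\<^sup>+x. indicator ?E x * R j x \<partial>M)"
    using ae by (intro nn_integral_mono_AE) (auto elim!: eventually_mono intro: mult_left_mono)
  also have "\<dots> = (\<integral>\<^sup>+x. (\<Sum>i. indicator ?E x * ennreal (a (i + j) x)) \<partial>M)"
    unfolding R_def by simp
  also have "\<dots> = (\<Sum>i. \<integral>\<^sup>+x. indicator ?E x * ennreal (a (i + j) x) \<partial>M)"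
    by (rule nn_integral_suminf) (simp add: a_def)
  also have "\<dots> \<le> (\<Sum>i. ennreal ((1/2)^(i + j) * (measure M B + 1)))"
    by (intro suminf_le term_bound) auto
  also have "\<dots> = ennreal (\<Sum>i. (1/2)^(i + j) * (measure M B + 1))"
  proof (rule suminf_ennreal2)
    show "summable (\<lambda>i. (1/2::real)^(i + j) * (measure M B + 1))"
      by (simp add: power_add summable_geometric summable_mult2)
  qed auto
  also have "(\<Sum>i. (1/2::real)^(i + j) * (measure M B + 1)) = (\<Sum>i. (1/2)^i * ((1/2)^j * (measure M B + 1)))"
    by (simp add: power_add mult_ac)
  also have "\<dots> = (\<Sum>i. (1/2::real)^i) * ((1/2)^j * (measure M B + 1))"
    by (rule suminf_mult2[symmetric]) (simp add: summable_geometric)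
  also have "(\<Sum>i. (1/2::real)^i) = 2"
    using suminf_geometric[of "1/2::real"] by simp
  finally show ?thesis by (simp add: mult_ac)
qed

lemma zero_type: "0 < e \<Longrightarrow> \<exists>n\<ge>N. emeasure M (B \<inter> (T^^n) -` B) < ennreal e"
proof -
  assume e: "0 < e"
  have "(\<lambda>j. 2 * (1/2::real)^j * (measure M B + 1)) \<longlonglongrightarrow> 2 * 0 * (measure M B + 1)"
    by (intro tendsto_intros) simp
  then have "\<forall>\<^sub>F j in sequentially. 2 * (1/2::real)^j * (measure M B + 1) < e"
    using e by (intro order_tendstoD(2)) auto
  then obtain j where j: "N \<le> j" "2 * (1/2::real)^j * (measure M B + 1) < e"
    using eventually_conj[OF _ eventually_ge_at_top[of N]] unfolding eventually_sequentially
    by (metis (no_types, lifting) le_add2 le_add_same_cancel2 nat_le_linear)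
  have fin: "emeasure M (B \<inter> (T^^ns j) -` B) \<noteq> \<infinity>"
    using Bfin emeasure_mono[of "B \<inter> (T^^ns j) -` B" B M] B by (auto simp: top_unique)
  have "emeasure M (B \<inter> (T^^ns j) -` B) = ennreal (measure M (B \<inter> (T^^ns j) -` B))"
    using fin by (simp add: emeasure_eq_ennreal_measure)
  also have "\<dots> \<le> ennreal (2 * (1/2)^j * (measure M B + 1))" by (rule BE_bound)
  also have "\<dots> < ennreal e" using j e by (intro ennreal_lessI) auto
  finally show ?thesis using j ns_ge(1)[of j] by (intro exI[of _ "ns j"]) auto
qed

end

theorem mainTheorem5:
  fixes T :: "'a::metric_space \<Rightarrow> 'a"
    and L M :: "'a measure"
  assumes "compact (UNIV :: 'a set)"
    and "T \<in> borel \<rightarrow>\<^sub>M borel"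
    and "sets L = sets borel"
    and "prob_space L"
    and "nonsingular T L"
    and "exact T L"
    and "sets M = sets borel"
    and "absolutely_continuous L M"
    and "emeasure M (space M) = \<infinity>"
    and "sigma_finite_measure M"
    and "invariant_measure T M"
  shows "\<not> full T L"
proof
  assume full: "full T L"
  note Ts = assms(2) and sL = assms(3) and P = assms(4) and ex = assms(6) and sM = assms(7)
    and ac = assms(8) and inf = assms(9) and sf = assms(10) and invm = assms(11)
  have spL: "space L = UNIV" using sets_eq_imp_space_eq[OF sL] by simp
  have spM: "space M = UNIV" using sets_eq_imp_space_eq[OF sM] by simp
  have sLM: "sets L = sets M" using sL sM by simp
  have Tm: "T \<in> M \<rightarrow>\<^sub>M M" using Ts by (simp add: measurable_cong_sets[OF sM sM])
  have inv: "emeasure M (T -` A) = emeasure M A" if "A \<in> sets M" for A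
    using invm that unfolding invariant_measure_def by (simp add: spM)
  have acM: "emeasure M A = 0" if "A \<in> sets M" "emeasure L A = 0" for A
    using absolutely_continuousD[OF ac _ that(2)] that(1) sLM by simp
  have tail: "emeasure M A = 0 \<or> emeasure M A = \<infinity>"
    if H: "\<forall>n. \<exists>C\<in>sets M. A = (T^^n) -` C" for A
  proof -
    have AM: "A \<in> sets M" using H[rule_format, of 0] by auto
    have "A \<in> tail_sets T L" unfolding tail_sets_def using H by (auto simp: spL sLM) blast
    then have "emeasure L A = 0 \<or> emeasure L (space L - A) = 0"
      using ex unfolding exact_def by blast
    then show ?thesis
    proof
      assume "emeasure L A = 0" then show ?thesis using acM AM sLM by auto
    next
      assume "emeasure L (space L - A) = 0"
      then have z: "emeasure M (UNIV - A) = 0" using acM[of "UNIV - A"] AM spL spM sets.compl_sets[of A M] by auto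
      have "emeasure M UNIV = emeasure M A + emeasure M (UNIV - A)"
      proof -
        have c: "UNIV - A \<in> sets M" using sets.compl_sets[OF AM] by (simp add: spM)
        have "emeasure M A + emeasure M (UNIV - A) = emeasure M (A \<union> (UNIV - A))"
          by (rule plus_emeasure[OF AM c]) simp
        then show ?thesis by simp
      qed
      then show ?thesis using z inf spM by simp
    qed
  qed
  interpret zt M T by (rule zt.intro[OF sf spM Tm inv tail])
  obtain B where Bp: "B \<in> sets M" "0 < emeasure M B" "emeasure M B < \<infinity>"
  proof -
    obtain AA where AA: "countable AA" "AA \<subseteq> sets M" "\<Union>AA = space M" "\<forall>a\<in>AA. emeasure M a \<noteq> \<infinity>"
      using sigma_finite_measure.sigma_finite_countable[OF sf] by blast
    have "\<exists>a\<in>AA. emeasure M a \<noteq> 0"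
    proof (rule ccontr)
      assume "\<not> ?thesis"
      then have "(\<Union>a\<in>AA. a) \<in> null_sets M" using AA by (intro null_sets_UN') auto
      then show False using AA(3) inf by auto
    qed
    then obtain a where "a \<in> AA" "emeasure M a \<noteq> 0" by blast
    then show ?thesis using AA by (intro that[of a]) (auto simp: zero_less_iff_neq_zero less_top)
  qed
  interpret zt2 M T B using Bp by unfold_locales auto
  define mB where "mB = measure M B"
  have eB: "emeasure M B = ennreal mB" using Bp(3) unfolding mB_def by (intro emeasure_eq_ennreal_measure) auto
  have mBpos: "0 < mB" using Bp eB by (cases "mB > 0") (auto simp: ennreal_neg)
  define nn where "nn k = (SOME n. n \<ge> k \<and> emeasure M (B \<inter> (T^^n) -` B) < ennreal (mB * (1/2)^(k+2)))" for k
  have nn: "nn k \<ge> k \<and> emeasure M (B \<inter> (T^^nn k) -` B) < ennreal (mB * (1/2)^(k+2))" for k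
    unfolding nn_def by (rule someI_ex) (use zero_type[of "mB * (1/2)^(k+2)" k] mBpos in auto)
  define A0 where "A0 = B - (\<Union>k. (T^^nn k) -` B)"
  have A0M: "A0 \<in> sets M" unfolding A0_def using Bp by (auto intro!: pre_sets)
  have "emeasure M B \<le> emeasure M (A0 \<union> (\<Union>k. B \<inter> (T^^nn k) -` B))"
    using A0M Bp by (intro emeasure_mono) (auto simp: A0_def intro!: pre_sets)
  also have "\<dots> \<le> emeasure M A0 + emeasure M (\<Union>k. B \<inter> (T^^nn k) -` B)"
    using A0M Bp by (intro emeasure_subadditive) (auto intro!: pre_sets)
  also have "emeasure M (\<Union>k. B \<inter> (T^^nn k) -` B) \<le> (\<Sum>k. emeasure M (B \<inter> (T^^nn k) -` B))"
    using Bp by (intro emeasure_subadditive_countably) (auto intro!: pre_sets)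
  also have "\<dots> \<le> (\<Sum>k. ennreal (mB * (1/2)^(k+2)))"
    using nn by (intro suminf_le) (auto intro: less_imp_le)
  also have "\<dots> = ennreal (\<Sum>k. mB * (1/2)^(k+2))"
    using mBpos by (intro suminf_ennreal2) (auto intro!: summable_mult summable_geometric simp: power_add)
  also have "(\<Sum>k. mB * (1/2::real)^(k+2)) = mB / 2"
  proof -
    have "(\<Sum>k. mB * (1/2::real)^(k+2)) = (mB / 4) * (\<Sum>k. (1/2::real)^k)"
      by (subst suminf_mult[symmetric]) (auto intro: summable_geometric simp: power_add)
    also have "(\<Sum>k. (1/2::real)^k) = 2" using suminf_geometric[of "1/2::real"] by simp
    finally show ?thesis by simp
  qed
  finally have ineq: "ennreal mB \<le> emeasure M A0 + ennreal (mB / 2)"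
    unfolding eB by (simp add: add_left_mono)
  have MA0: "emeasure M A0 \<noteq> 0"
  proof
    assume "emeasure M A0 = 0"
    then have "mB \<le> mB / 2" using ineq mBpos by simp
    then show False using mBpos by simp
  qed
  have LA0: "0 < emeasure L A0"
    using acM[OF A0M] MA0 by (auto simp: zero_less_iff_neq_zero)
  have lim: "(\<lambda>n. emeasure (completion L) ((T ^^ n) ` A0)) \<longlonglongrightarrow> 1"
    using full LA0 A0M sLM unfolding full_def by auto
  have nnlim: "filterlim nn at_top sequentially"
    by (rule filterlim_at_top_mono[OF filterlim_ident]) (use nn in auto)
  have lim2: "(\<lambda>k. emeasure (completion L) ((T ^^ nn k) ` A0)) \<longlonglongrightarrow> 1"
    using filterlim_compose[OF lim nnlim] by (simp add: o_def)
  have BL: "B \<in> sets L" using Bp sLM by simp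
  have bound: "emeasure (completion L) ((T ^^ nn k) ` A0) \<le> emeasure L (UNIV - B)" for k
  proof -
    have "(T ^^ nn k) ` A0 \<subseteq> UNIV - B" unfolding A0_def by auto
    moreover have "UNIV - B \<in> sets (completion L)" using BL spL
      by (metis sets.compl_sets sets_completionI_sets)
    ultimately have "emeasure (completion L) ((T ^^ nn k) ` A0) \<le> emeasure (completion L) (UNIV - B)"
      by (rule emeasure_mono)
    also have "\<dots> = emeasure L (UNIV - B)" using BL spL
      by (subst emeasure_completion) (auto simp: sets.compl_sets[of B L, simplified spL])
    finally show ?thesis .
  qed
  have x1: "1 \<le> emeasure L (UNIV - B)"
    using lim2 bound by (intro LIMSEQ_le_const2) auto
  have sum1: "emeasure L B + emeasure L (UNIV - B) = 1"
    using BL P spL prob_space.emeasure_space_1[OF P] by (subst plus_emeasure) (auto simp: sets.compl_sets[of B L, simplified spL])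
  have bpos: "0 < emeasure L B"
    using acM[OF Bp(1)] Bp(2) BL by (auto simp: zero_less_iff_neq_zero)
  have "1 + emeasure L B \<le> 1 + 0"
    using add_left_mono[OF x1, of "emeasure L B"] sum1 by (simp add: add.commute)
  then have "emeasure L B \<le> 0"
    by (subst (asm) ennreal_add_left_cancel_le) simp
  then show False using bpos by simp
qed

end
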